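(* Let $n\ge 3$, let $K$ be a proper $4$-coloring of $G=H_2(n,n-1)$, and let $x_1,x_2,x_3,x_4$ be distinct vertices such that $(x_1,x_2),(x_2,x_3),(x_3,x_4),(x_4,x_1)$ are all transition edges for $K$. Then: (a) the colors $K(x_1),\dots,K(x_4)$ are pairwise distinct; (b) every vertex $y\notin\{x_1,\dots,x_4\}$ is adjacent to at most one of $x_1,\dots,x_4$, and if $y$ is adjacent to $x_i$ then $K(y)=K(\tilde{x}_i)$, where $\tilde{x}_i$ is the vertex opposite to $x_i$ on the cycle (i.e. $\tilde{x}_1=x_3$, $\tilde{x}_3=x_1$, $\tilde{x}_2=x_4$, $\tilde{x}_4=x_2$).
   Context: $H_2(n,n-1)$ is the simple undirected graph with vertex set $\mathbb{Z}_2^n$ in which $x,y$ are adjacent iff their Hamming distance is at least $n-1$. For a proper $k$-coloring $K$ of a simple graph, an edge $(x,y)$ is a transition edge for $K$ if swapping the colors of $x$ and $y$ (all other colors unchanged) yields again a proper $k$-coloring. *)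

theory Defs
  imports Main
begin

text \<open>Vertices of H_2(n,n-1): the binary words of length n, represented as bool lists.\<close>
definition cube :: "nat \<Rightarrow> bool list set" where
  "cube n = {xs. length xs = n}"

definition hamming :: "bool list \<Rightarrow> bool list \<Rightarrow> nat" where
  "hamming xs ys = card {i. i < length xs \<and> xs ! i \<noteq> ys ! i}"

definition H_adj :: "nat \<Rightarrow> bool list \<Rightarrow> bool list \<Rightarrow> bool" where
  "H_adj n x y \<longleftrightarrow> x \<in> cube n \<and> y \<in> cube n \<and> x \<noteq> y \<and> hamming x y \<ge> n - 1"

definition proper_coloring :: "nat \<Rightarrow> nat \<Rightarrow> (bool list \<Rightarrow> nat) \<Rightarrow> bool" where
  "proper_coloring n k K \<longleftrightarrow>
     (\<forall>x\<in>cube n. K x < k) \<and> (\<forall>x y. H_adj n x y \<longrightarrow> K x \<noteq> K y)"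

definition transition_edge :: "nat \<Rightarrow> nat \<Rightarrow> (bool list \<Rightarrow> nat) \<Rightarrow> bool list \<Rightarrow> bool list \<Rightarrow> bool" where
  "transition_edge n k K x y \<longleftrightarrow>
     H_adj n x y \<and> proper_coloring n k (K(x := K y, y := K x))"

end

theory Submission
  imports Defs
begin

lemma hamming_sym: "length a = length b \<Longrightarrow> hamming a b = hamming b a"
  unfolding hamming_def by (metis)

lemma H_adj_sym: "H_adj n a b \<Longrightarrow> H_adj n b a"
  unfolding H_adj_def cube_def using hamming_sym by auto

lemma trans_nb1:
  assumes "transition_edge n k K u v" "H_adj n u z" "z \<noteq> v"
  shows "K z \<noteq> K v"
proof -
  have p: "proper_coloring n k (K(u := K v, v := K u))" and uv: "u \<noteq> v"
    using assms(1) unfolding transition_edge_def H_adj_def by auto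
  have "z \<noteq> u" using assms(2) unfolding H_adj_def by auto
  have "(K(u := K v, v := K u)) u \<noteq> (K(u := K v, v := K u)) z"
    using p assms(2) unfolding proper_coloring_def by blast
  thus ?thesis using uv \<open>z \<noteq> u\<close> assms(3) by auto
qed

lemma trans_nb2:
  assumes "transition_edge n k K u v" "H_adj n v z" "z \<noteq> u"
  shows "K z \<noteq> K u"
proof -
  have p: "proper_coloring n k (K(u := K v, v := K u))" and uv: "u \<noteq> v"
    using assms(1) unfolding transition_edge_def H_adj_def by auto
  have "z \<noteq> v" using assms(2) unfolding H_adj_def by auto
  have "(K(u := K v, v := K u)) v \<noteq> (K(u := K v, v := K u)) z"
    using p assms(2) unfolding proper_coloring_def by blast
  thus ?thesis using uv \<open>z \<noteq> v\<close> assms(3) by auto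
qed

lemma col4: fixes a b c d y :: nat
  assumes "a<4" "b<4" "c<4" "d<4" "y<4" "a\<noteq>b" "a\<noteq>c" "a\<noteq>d" "b\<noteq>c" "b\<noteq>d" "c\<noteq>d"
   "y\<noteq>a" "y\<noteq>b" "y\<noteq>c" shows "y = d"
proof (rule ccontr)
  assume "y \<noteq> d"
  then have "card {a,b,c,d,y} = 5" using assms by simp
  moreover have "card {a,b,c,d,y} \<le> card {0..<4::nat}" by (rule card_mono) (use assms in auto)
  ultimately show False by simp
qed

theorem lemma5p6:
  fixes n :: nat and K :: "bool list \<Rightarrow> nat" and x :: "nat \<Rightarrow> bool list"
  assumes "n \<ge> 3"
    and "proper_coloring n 4 K"
    and "\<forall>i<4. x i \<in> cube n"
    and "\<forall>i<4. \<forall>j<4. i \<noteq> j \<longrightarrow> x i \<noteq> x j"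
    and "\<forall>i<4. transition_edge n 4 K (x i) (x ((i + 1) mod 4))"
  shows "(\<forall>i<4. \<forall>j<4. i \<noteq> j \<longrightarrow> K (x i) \<noteq> K (x j))
       \<and> (\<forall>y\<in>cube n. y \<notin> x ` {0..<4} \<longrightarrow>
            card {i. i < 4 \<and> H_adj n y (x i)} \<le> 1
          \<and> (\<forall>i<4. H_adj n y (x i) \<longrightarrow> K y = K (x ((i + 2) mod 4))))"
proof -
  have t0: "transition_edge n 4 K (x 0) (x 1)" proof -
    have e: "((0::nat) + 1) mod 4 = 1" by simp
    have l: "(0::nat) < 4" by simp
    show ?thesis using assms(5)[rule_format, OF l] unfolding e .
  qed
  have t1: "transition_edge n 4 K (x 1) (x 2)" proof -
    have e: "((1::nat) + 1) mod 4 = 2" by simp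
    have l: "(1::nat) < 4" by simp
    show ?thesis using assms(5)[rule_format, OF l] unfolding e .
  qed
  have t2: "transition_edge n 4 K (x 2) (x 3)" proof -
    have e: "((2::nat) + 1) mod 4 = 3" by simp
    have l: "(2::nat) < 4" by simp
    show ?thesis using assms(5)[rule_format, OF l] unfolding e .
  qed
  have t3: "transition_edge n 4 K (x 3) (x 0)" proof -
    have e: "((3::nat) + 1) mod 4 = 0" by simp
    have l: "(3::nat) < 4" by simp
    show ?thesis using assms(5)[rule_format, OF l] unfolding e .
  qed
  note ts = t0 t1 t2 t3
  have adj: "H_adj n (x 0) (x 1)" "H_adj n (x 1) (x 2)" "H_adj n (x 2) (x 3)" "H_adj n (x 3) (x 0)"
    using ts unfolding transition_edge_def by auto
  have pc: "\<And>u v. H_adj n u v \<Longrightarrow> K u \<noteq> K v" using assms(2) unfolding proper_coloring_def by blast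
  have d: "x 0 \<noteq> x 1" "x 0 \<noteq> x 2" "x 0 \<noteq> x 3" "x 1 \<noteq> x 2" "x 1 \<noteq> x 3" "x 2 \<noteq> x 3"
    using assms(4) by auto
  have c02: "K (x 0) \<noteq> K (x 2)" using trans_nb1[OF t1 H_adj_sym[OF adj(1)]] d by auto
  have c13: "K (x 1) \<noteq> K (x 3)" using trans_nb1[OF t2 H_adj_sym[OF adj(2)]] d by auto
  have c: "K (x 0) \<noteq> K (x 1)" "K (x 1) \<noteq> K (x 2)" "K (x 2) \<noteq> K (x 3)" "K (x 3) \<noteq> K (x 0)"
    using pc adj by auto
  have lt: "K (x 0) < 4" "K (x 1) < 4" "K (x 2) < 4" "K (x 3) < 4"
    using assms(2,3) unfolding proper_coloring_def by auto
  have A: "\<forall>i<4. \<forall>j<4. i \<noteq> j \<longrightarrow> K (x i) \<noteq> K (x j)"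
  proof (intro allI impI)
    fix i j :: nat assume "i < 4" "j < 4" "i \<noteq> j"
    then have "i = 0 \<or> i = 1 \<or> i = 2 \<or> i = 3" "j = 0 \<or> j = 1 \<or> j = 2 \<or> j = 3" by auto
    then show "K (x i) \<noteq> K (x j)" using c c02 c13 \<open>i \<noteq> j\<close> by auto
  qed
  have B: "\<forall>y\<in>cube n. y \<notin> x ` {0..<4} \<longrightarrow>
            card {i. i < 4 \<and> H_adj n y (x i)} \<le> 1
          \<and> (\<forall>i<4. H_adj n y (x i) \<longrightarrow> K y = K (x ((i + 2) mod 4)))"
  proof (intro ballI impI)
    fix y assume y: "y \<in> cube n" "y \<notin> x ` {0..<4}"
    have ky: "K y < 4" using y assms(2) unfolding proper_coloring_def by auto
    have yn: "y \<noteq> x 0" "y \<noteq> x 1" "y \<noteq> x 2" "y \<noteq> x 3" using y(2) by force+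
    have C: "\<forall>i<4. H_adj n y (x i) \<longrightarrow> K y = K (x ((i + 2) mod 4))"
    proof (intro allI impI)
      fix i :: nat assume i: "i < 4" "H_adj n y (x i)"
      have h: "H_adj n (x i) y" using H_adj_sym[OF i(2)] .
      have "i = 0 \<or> i = 1 \<or> i = 2 \<or> i = 3" using i by auto
      then show "K y = K (x ((i + 2) mod 4))"
      proof (elim disjE)
        assume "i = 0"
        have "K y \<noteq> K (x 1)" using trans_nb1[OF t0, of y] h yn \<open>i = 0\<close> by auto
        moreover have "K y \<noteq> K (x 3)" using trans_nb2[OF t3, of y] h yn \<open>i = 0\<close> by auto
        moreover have "K y \<noteq> K (x 0)" using pc[OF i(2)] \<open>i = 0\<close> by simp
        ultimately have "K y = K (x 2)" by (intro col4[of "K (x 1)" "K (x 3)" "K (x 0)"]) (use lt ky c c02 c13 in auto)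
        moreover have e: "((0::nat) + 2) mod 4 = 2" by simp
        ultimately show ?thesis by (simp only: \<open>i = 0\<close> e)
      next
        assume "i = 1"
        have "K y \<noteq> K (x 2)" using trans_nb1[OF t1, of y] h yn \<open>i = 1\<close> by auto
        moreover have "K y \<noteq> K (x 0)" using trans_nb2[OF t0, of y] h yn \<open>i = 1\<close> by auto
        moreover have "K y \<noteq> K (x 1)" using pc[OF i(2)] \<open>i = 1\<close> by simp
        ultimately have "K y = K (x 3)" by (intro col4[of "K (x 2)" "K (x 0)" "K (x 1)"]) (use lt ky c c02 c13 in auto)
        moreover have e: "((1::nat) + 2) mod 4 = 3" by simp
        ultimately show ?thesis by (simp only: \<open>i = 1\<close> e)
      next
        assume "i = 2"
        have "K y \<noteq> K (x 3)" using trans_nb1[OF t2, of y] h yn \<open>i = 2\<close> by auto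
        moreover have "K y \<noteq> K (x 1)" using trans_nb2[OF t1, of y] h yn \<open>i = 2\<close> by auto
        moreover have "K y \<noteq> K (x 2)" using pc[OF i(2)] \<open>i = 2\<close> by simp
        ultimately have "K y = K (x 0)" by (intro col4[of "K (x 3)" "K (x 1)" "K (x 2)"]) (use lt ky c c02 c13 in auto)
        moreover have e: "((2::nat) + 2) mod 4 = 0" by simp
        ultimately show ?thesis by (simp only: \<open>i = 2\<close> e)
      next
        assume "i = 3"
        have "K y \<noteq> K (x 0)" using trans_nb1[OF t3, of y] h yn \<open>i = 3\<close> by auto
        moreover have "K y \<noteq> K (x 2)" using trans_nb2[OF t2, of y] h yn \<open>i = 3\<close> by auto
        moreover have "K y \<noteq> K (x 3)" using pc[OF i(2)] \<open>i = 3\<close> by simp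
        ultimately have "K y = K (x 1)" by (intro col4[of "K (x 0)" "K (x 2)" "K (x 3)"]) (use lt ky c c02 c13 in auto)
        moreover have e: "((3::nat) + 2) mod 4 = 1" by simp
        ultimately show ?thesis by (simp only: \<open>i = 3\<close> e)
      qed
    qed
    have "card {i. i < 4 \<and> H_adj n y (x i)} \<le> Suc 0"
    proof (rule iffD2[OF card_le_Suc0_iff_eq])
      show "finite {i. i < 4 \<and> H_adj n y (x i)}" by simp
      show "\<forall>i\<in>{i. i < 4 \<and> H_adj n y (x i)}. \<forall>j\<in>{i. i < 4 \<and> H_adj n y (x i)}. i = j"
      proof (intro ballI)
      fix i j assume "i \<in> {i. i < 4 \<and> H_adj n y (x i)}" "j \<in> {i. i < 4 \<and> H_adj n y (x i)}"
      then have ij: "i < 4" "j < 4" "H_adj n y (x i)" "H_adj n y (x j)" by auto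
      have "K y = K (x ((i + 2) mod 4))" using C ij(1,3) by blast
      moreover have "K y = K (x ((j + 2) mod 4))" using C ij(2,4) by blast
      moreover have "(i + 2) mod 4 < 4" "(j + 2) mod 4 < 4" by auto
      ultimately have "(i + 2) mod 4 = (j + 2) mod 4" using A by metis
      moreover have "i = 0 \<or> i = 1 \<or> i = 2 \<or> i = 3" "j = 0 \<or> j = 1 \<or> j = 2 \<or> j = 3" using ij by auto
      ultimately show "i = j" by auto
      qed
    qed
    then show "card {i. i < 4 \<and> H_adj n y (x i)} \<le> 1
          \<and> (\<forall>i<4. H_adj n y (x i) \<longrightarrow> K y = K (x ((i + 2) mod 4)))" using C by simp
  qed
  show ?thesis using A B by blast
qed

end
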